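(* Let $n \geq 3$ and let $(\mu, \Sigma)$ satisfy the normalization below. Then there exists an infinite set $\mathcal{S}$ of pairs $(\mu', \Sigma')$, each satisfying the same normalization, such that for all $i, j \in [n]$ and all $(\mu', \Sigma') \in \mathcal{S}$, $$\Pr_{X \sim \mathcal{N}(\mu, \Sigma)}\{X_i \geq X_j\} = \Pr_{X \sim \mathcal{N}(\mu', \Sigma')}\{X_i \geq X_j\}.$$
   Context: Correlated probit model: utilities $X \sim \mathcal{N}(\mu, \Sigma)$ with $\mu \in \mathbb{R}^n$ and $\Sigma \in \mathbb{R}^{n\times n}$ symmetric positive semidefinite. Normalization: $\langle \mu, \mathbf{1}\rangle = 0$, $\Sigma \mathbf{1} = 0$, $\operatorname{Tr}(\Sigma) = n$, and $\operatorname{rank}(\Sigma) = n-1$, where $\mathbf{1}$ is the all-ones vector. This normalization does not change the distribution of choices. *)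

theory Defs
  imports "HOL-Probability.Probability"
begin

definition std_normal_measure :: "real measure" where
  "std_normal_measure = density lborel std_normal_density"

definition std_gauss_vec :: "('n::finite \<Rightarrow> real) measure" where
  "std_gauss_vec = PiM UNIV (\<lambda>_. std_normal_measure)"

text \<open>Multivariate normal N(mu, Sg): law of mu + A z with z standard
  Gaussian and A A^T = Sg (A exists for PSD Sg; the law does not depend
  on the choice of A).\<close>
definition mvn :: "real^'n::finite \<Rightarrow> real^'n^'n \<Rightarrow> (real^'n) measure" where
  "mvn mu Sg = distr std_gauss_vec borel
     (\<lambda>z. mu + (SOME A :: real^'n^'n. A ** transpose A = Sg) *v (\<chi> i. z i))"

definition psd :: "real^'n::finite^'n \<Rightarrow> bool" where
  "psd Sg \<longleftrightarrow> transpose Sg = Sg \<and> (\<forall>x. 0 \<le> x \<bullet> (Sg *v x))"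

definition probit_normalized :: "real^'n::finite \<Rightarrow> real^'n^'n \<Rightarrow> bool" where
  "probit_normalized mu Sg \<longleftrightarrow>
     psd Sg \<and> mu \<bullet> (1::real^'n) = 0 \<and> Sg *v (1::real^'n) = 0 \<and>
     trace Sg = real CARD('n) \<and> rank Sg = CARD('n) - 1"

definition pair_prob :: "real^'n::finite \<Rightarrow> real^'n^'n \<Rightarrow> 'n \<Rightarrow> 'n \<Rightarrow> real" where
  "pair_prob mu Sg i j = measure (mvn mu Sg) {x. x $ j \<le> x $ i}"

end

theory Submission
  imports Defs
begin


lemma sym_inner: "transpose S = S \<Longrightarrow> x \<bullet> (S *v y) = (S *v x) \<bullet> (y::real^'n::finite)"
  by (metis dot_lmul_matrix transpose_matrix_vector)

lemma quad_expand:
  fixes S :: "real^'n::finite^'n"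
  assumes "transpose S = S"
  shows "(x + t *\<^sub>R v) \<bullet> (S *v (x + t *\<^sub>R v)) = x \<bullet> (S *v x) + 2 * t * ((S *v x) \<bullet> v) + t\<^sup>2 * (v \<bullet> (S *v v))"
proof -
  have "(x + t *\<^sub>R v) \<bullet> (S *v (x + t *\<^sub>R v)) = x \<bullet> (S *v x) + t * (x \<bullet> (S *v v)) + t * (v \<bullet> (S *v x)) + t * t * (v \<bullet> (S *v v))"
    by (simp add: matrix_vector_right_distrib matrix_vector_mult_scaleR inner_add_left inner_add_right algebra_simps)
  moreover have "x \<bullet> (S *v v) = (S *v x) \<bullet> v" using sym_inner[OF assms] .
  moreover have "v \<bullet> (S *v x) = (S *v x) \<bullet> v" by (simp add: inner_commute)
  ultimately show ?thesis by (simp add: power2_eq_square algebra_simps)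
qed

lemma psd_zero:
  fixes S :: "real^'n::finite^'n"
  assumes "psd S" "x \<bullet> (S *v x) = 0"
  shows "S *v x = 0"
proof (rule ccontr)
  assume ne: "S *v x \<noteq> 0"
  define v where "v = S *v x"
  define a where "a = v \<bullet> v"
  define q where "q = v \<bullet> (S *v v)"
  have a: "a > 0" using ne by (simp add: a_def v_def)
  have q: "q \<ge> 0" using assms(1) by (simp add: psd_def q_def)
  have key: "0 \<le> 2 * t * a + t\<^sup>2 * q" for t
  proof -
    have "0 \<le> (x + t *\<^sub>R v) \<bullet> (S *v (x + t *\<^sub>R v))" using assms(1) by (simp add: psd_def)
    also have "\<dots> = 2 * t * a + t\<^sup>2 * q"
      using quad_expand[of S x t v] assms by (simp add: psd_def a_def q_def v_def)
    finally show ?thesis .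
  qed
  define s where "s = a / (q + 1)"
  have s: "s > 0" using a q by (simp add: s_def)
  have "0 \<le> 2 * (-s) * a + (-s)\<^sup>2 * q" by (rule key)
  then have "0 \<le> s * (s * q - 2 * a)" by (simp add: power2_eq_square algebra_simps)
  then have "2 * a \<le> s * q" using s by (simp add: zero_le_mult_iff)
  moreover have "s * q < a"
  proof -
    have "s * q = a * (q / (q + 1))" by (simp add: s_def)
    also have "\<dots> < a * 1" using a q by (intro mult_strict_left_mono) auto
    finally show ?thesis by simp
  qed
  ultimately show False using a by simp
qed



lemma mv_axis[simp]: "((S::real^'n::finite^'m) *v axis k 1) $ p = S $ p $ k"
  by (simp add: matrix_vector_mult_basis column_def)

lemma sym_entry: "transpose (S::real^'n::finite^'n) = S \<Longrightarrow> S $ p $ q = S $ q $ p"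
  by (metis transpose_def vec_lambda_beta)

lemma quad_axis: "axis k 1 \<bullet> ((S::real^'n::finite^'n) *v axis k 1) = S $ k $ k"
  by (simp add: inner_axis')

lemma psd_diag_nonneg: "psd S \<Longrightarrow> 0 \<le> S $ k $ k"
  using quad_axis[of k S] unfolding psd_def by metis

lemma psd_diag_zero: "psd S \<Longrightarrow> S $ k $ k = 0 \<Longrightarrow> S *v axis k 1 = 0"
  by (rule psd_zero) (simp_all add: quad_axis)

lemma psd_diag_zero_entry: "psd S \<Longrightarrow> S $ k $ k = 0 \<Longrightarrow> S $ p $ k = 0"
  using psd_diag_zero[of S k] by (metis mv_axis zero_index)

lemma factor_aux:
  fixes S :: "real^'n::finite^'n"
  shows "card {k. S $ k $ k \<noteq> 0} = N \<Longrightarrow> psd S \<Longrightarrow>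
    \<exists>A::real^'n^'n. A ** transpose A = S \<and> (\<forall>k. S $ k $ k = 0 \<longrightarrow> (\<forall>p. A $ p $ k = 0))"
proof (induction N arbitrary: S rule: less_induct)
  case (less N S)
  show ?case
  proof (cases "\<forall>k. S $ k $ k = 0")
    case True
    then have "S = 0"
      using psd_diag_zero_entry[OF less.prems(2)] by (simp add: vec_eq_iff)
    then show ?thesis by (intro exI[of _ 0]) simp
  next
    case False
    then obtain i where i0: "S $ i $ i \<noteq> 0" by blast
    have sym: "transpose S = S" using less.prems(2) by (simp add: psd_def)
    have ipos: "S $ i $ i > 0" using i0 psd_diag_nonneg[OF less.prems(2), of i] by simp
    define c where "c = column i S"
    have c_comp: "c $ p = S $ p $ i" for p by (simp add: c_def column_def)
    define S' where "S' = S - (\<chi> p q. c $ p * c $ q / S $ i $ i)"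
    have S'_ent: "S' $ p $ q = S $ p $ q - S $ p $ i * S $ q $ i / S $ i $ i" for p q
      by (simp add: S'_def c_comp)
    have cx: "c \<bullet> x = (S *v x) $ i" for x
    proof -
      have "c \<bullet> x = (\<Sum>p\<in>UNIV. S $ p $ i * x $ p)" by (simp add: inner_vec_def c_comp)
      also have "\<dots> = (\<Sum>p\<in>UNIV. S $ i $ p * x $ p)"
        by (intro sum.cong refl) (metis sym_entry[OF sym])
      also have "\<dots> = (S *v x) $ i" by (simp add: matrix_vector_mult_def)
      finally show ?thesis .
    qed
    have S'_mv: "S' *v x = S *v x - ((c \<bullet> x) / S $ i $ i) *\<^sub>R c" for x
    proof -
      have "(S' *v x) $ p = (S *v x - ((c \<bullet> x) / S $ i $ i) *\<^sub>R c) $ p" for p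
      proof -
        have "(S' *v x) $ p = (\<Sum>q\<in>UNIV. S $ p $ q * x $ q) - (\<Sum>q\<in>UNIV. c $ p * c $ q / S $ i $ i * x $ q)"
          by (simp add: matrix_vector_mult_def S'_def left_diff_distrib sum_subtractf)
        also have "(\<Sum>q\<in>UNIV. c $ p * c $ q / S $ i $ i * x $ q) = (c \<bullet> x) / S $ i $ i * c $ p"
        proof -
          have "(c \<bullet> x) / S $ i $ i * c $ p = (\<Sum>q\<in>UNIV. c $ q * x $ q) * (c $ p / S $ i $ i)"
            by (simp add: inner_vec_def)
          also have "\<dots> = (\<Sum>q\<in>UNIV. c $ q * x $ q * (c $ p / S $ i $ i))"
            by (rule sum_distrib_right)
          finally show ?thesis by (simp add: ac_simps)
        qed
        finally show ?thesis by (simp add: matrix_vector_mult_def)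
      qed
      then show ?thesis by (simp add: vec_eq_iff)
    qed
    have S'_sym: "S' $ q $ p = S' $ p $ q" for p q
      unfolding S'_ent using sym_entry[OF sym, of p q] by (simp add: mult.commute)
    have sym': "transpose S' = S'"
      by (simp add: vec_eq_iff transpose_def S'_sym)
    have psd': "psd S'"
      unfolding psd_def
    proof (intro conjI allI sym')
      fix x :: "real^'n"
      define b where "b = (S *v x) $ i"
      have "0 \<le> (x + (- b / S $ i $ i) *\<^sub>R axis i 1) \<bullet> (S *v (x + (- b / S $ i $ i) *\<^sub>R axis i 1))"
        using less.prems(2) by (simp add: psd_def)
      also have "\<dots> = x \<bullet> (S *v x) + 2 * (- b / S $ i $ i) * b + (- b / S $ i $ i)\<^sup>2 * S $ i $ i"
        by (subst quad_expand[OF sym]) (simp add: quad_axis b_def inner_axis)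
      also have "\<dots> = x \<bullet> (S *v x) - b\<^sup>2 / S $ i $ i"
        using ipos by (simp add: power2_eq_square field_simps)
      also have "\<dots> = x \<bullet> (S' *v x)"
      proof -
        have "x \<bullet> (S' *v x) = x \<bullet> (S *v x) - (c \<bullet> x) / S $ i $ i * (c \<bullet> x)"
          by (simp add: S'_mv inner_diff_right inner_commute[of x c])
        then show ?thesis by (simp add: cx b_def power2_eq_square)
      qed
      finally show "0 \<le> x \<bullet> (S' *v x)" .
    qed
    have sub: "{k. S' $ k $ k \<noteq> 0} \<subseteq> {k. S $ k $ k \<noteq> 0} - {i}"
    proof
      fix k assume "k \<in> {k. S' $ k $ k \<noteq> 0}"
      then have k: "S' $ k $ k \<noteq> 0" by simp
      have "k \<noteq> i" using k ipos by (auto simp: S'_ent power2_eq_square)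
      moreover have "S $ k $ k \<noteq> 0"
      proof
        assume "S $ k $ k = 0"
        then have "S $ i $ k = 0" using psd_diag_zero_entry[OF less.prems(2), of k i] by simp
        then have "S $ k $ i = 0" using sym_entry[OF sym, of k i] by simp
        then show False using k \<open>S $ k $ k = 0\<close> by (simp add: S'_ent)
      qed
      ultimately show "k \<in> {k. S $ k $ k \<noteq> 0} - {i}" by simp
    qed
    have "card {k. S' $ k $ k \<noteq> 0} < N"
    proof -
      have "card {k. S' $ k $ k \<noteq> 0} \<le> card ({k. S $ k $ k \<noteq> 0} - {i})"
        by (rule card_mono[OF _ sub]) simp
      also have "\<dots> < card {k. S $ k $ k \<noteq> 0}"
        using i0 by (intro card_Diff1_less) auto
      finally show ?thesis using less.prems(1) by simp
    qed
    from less.IH[OF this refl psd'] obtain A' :: "real^'n^'n" where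
      A': "A' ** transpose A' = S'" "\<forall>k. S' $ k $ k = 0 \<longrightarrow> (\<forall>p. A' $ p $ k = 0)" by blast
    have A'i: "A' $ p $ i = 0" for p
      using A'(2) ipos by (simp add: S'_ent power2_eq_square)
    have sq: "sqrt (S $ i $ i) * sqrt (S $ i $ i) = S $ i $ i" using ipos by simp
    define A where "A = (\<chi> p q. A' $ p $ q + (if q = i then c $ p / sqrt (S $ i $ i) else 0))"
    have "A ** transpose A = S"
    proof -
      have "(A ** transpose A) $ p $ r = S $ p $ r" for p r
      proof -
        have "(A ** transpose A) $ p $ r = (\<Sum>q\<in>UNIV. A $ p $ q * A $ r $ q)"
          by (simp add: matrix_matrix_mult_def transpose_def)
        also have "\<dots> = (\<Sum>q\<in>UNIV. A' $ p $ q * A' $ r $ q + (if q = i then c $ p * c $ r / S $ i $ i else 0))"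
        proof (rule sum.cong[OF refl])
          fix q show "A $ p $ q * A $ r $ q = A' $ p $ q * A' $ r $ q + (if q = i then c $ p * c $ r / S $ i $ i else 0)"
            using ipos sq by (cases "q = i") (simp_all add: A_def A'i)
        qed
        also have "\<dots> = (A' ** transpose A') $ p $ r + c $ p * c $ r / S $ i $ i"
          by (simp add: sum.distrib matrix_matrix_mult_def transpose_def)
        also have "\<dots> = S $ p $ r"
          by (simp add: A'(1) S'_ent c_comp)
        finally show ?thesis .
      qed
      then show ?thesis by (simp add: vec_eq_iff)
    qed
    moreover have "\<forall>k. S $ k $ k = 0 \<longrightarrow> (\<forall>p. A $ p $ k = 0)"
    proof (intro allI impI)
      fix k p assume k: "S $ k $ k = 0"
      then have "k \<noteq> i" using ipos by auto
      moreover have "S' $ k $ k = 0"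
        using k psd_diag_zero_entry[OF less.prems(2) k, of i] sym_entry[OF sym, of k i] by (simp add: S'_ent)
      ultimately show "A $ p $ k = 0" using A'(2) by (simp add: A_def)
    qed
    ultimately show ?thesis by blast
  qed
qed

lemma psd_factor: "psd (S::real^'n::finite^'n) \<Longrightarrow> \<exists>A::real^'n^'n. A ** transpose A = S"
  using factor_aux by blast



definition Jm :: "real^'n::finite^'n" where
  "Jm = mat 1 - (\<chi> i j. 1 / real CARD('n))"

lemma one_inner: "(1::real^'n::finite) \<bullet> x = (\<Sum>i\<in>UNIV. x $ i)"
  by (simp add: inner_vec_def)

lemma Jm_mv: "Jm *v x = x - ((\<Sum>i\<in>UNIV. x $ i) / real CARD('n::finite)) *\<^sub>R (1::real^'n)"
proof -
  have "(Jm *v x) $ i = (\<Sum>j\<in>UNIV. (mat 1::real^'n^'n) $ i $ j * x $ j) - (\<Sum>j\<in>UNIV. x $ j / real CARD('n))" for i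
    by (simp add: Jm_def matrix_vector_mult_def left_diff_distrib sum_subtractf)
  moreover have "(\<Sum>j\<in>UNIV. (mat 1::real^'n^'n) $ i $ j * x $ j) = x $ i" for i
    using matrix_vector_mul_lid[of x] by (simp add: matrix_vector_mult_def vec_eq_iff)
  ultimately show ?thesis by (simp add: vec_eq_iff sum_divide_distrib[symmetric])
qed

lemma Jm_one: "Jm *v (1::real^'n::finite) = 0"
  by (simp add: Jm_mv vec_eq_iff)

lemma Jm_perp: "(1::real^'n::finite) \<bullet> y = 0 \<Longrightarrow> Jm *v y = y"
  by (simp add: Jm_mv one_inner)

lemma Jm_sym: "transpose (Jm :: real^'n::finite^'n) = Jm"
  by (simp add: vec_eq_iff Jm_def transpose_def mat_def)

lemma Jm_range: "(1::real^'n::finite) \<bullet> (Jm *v x) = 0"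
  by (metis Jm_one Jm_sym inner_zero_left sym_inner)

lemma Jm_diff: "(Jm *v x) $ i - (Jm *v x) $ j = x $ i - x $ j"
  by (simp add: Jm_mv)

lemma Jm_zero: "Jm *v x = 0 \<Longrightarrow> x = ((\<Sum>i\<in>UNIV. x $ i) / real CARD('n::finite)) *\<^sub>R (1::real^'n)"
  by (simp add: Jm_mv)

lemma dim_H: "dim {y::real^'n::finite. 1 \<bullet> y = 0} = CARD('n) - 1"
proof -
  have "(1::real^'n) \<noteq> 0" by (simp add: vec_eq_iff)
  then show ?thesis using dim_hyperplane[of "1::real^'n"] by simp
qed

lemma construct:
  fixes M :: "real^'n::finite^'n"
  assumes Msym: "transpose M = M"
    and pos0: "\<forall>y. 1 \<bullet> y = 0 \<longrightarrow> y \<noteq> 0 \<longrightarrow> 0 < y \<bullet> (M *v y)"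
  defines "S \<equiv> Jm ** M ** Jm"
  shows "transpose S = S" "S *v 1 = 0" "psd S" "rank S = CARD('n) - 1"
    "\<And>x. x \<bullet> (S *v x) = (Jm *v x) \<bullet> (M *v (Jm *v x))"
    "\<And>y. 1 \<bullet> y = 0 \<Longrightarrow> y \<bullet> (S *v y) = y \<bullet> (M *v y)"
proof -
  have pos: "\<And>y. 1 \<bullet> y = 0 \<Longrightarrow> y \<noteq> 0 \<Longrightarrow> 0 < y \<bullet> (M *v y)" using pos0 by blast
  have Smv: "S *v x = Jm *v (M *v (Jm *v x))" for x
    unfolding S_def by (metis matrix_vector_mul_assoc)
  show sym: "transpose S = S"
    by (simp add: S_def matrix_transpose_mul Jm_sym Msym matrix_mul_assoc)
  show S1: "S *v 1 = 0" by (simp add: Smv Jm_one)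
  show q: "x \<bullet> (S *v x) = (Jm *v x) \<bullet> (M *v (Jm *v x))" for x
    by (simp add: Smv sym_inner[OF Jm_sym])
  show "1 \<bullet> y = 0 \<Longrightarrow> y \<bullet> (S *v y) = y \<bullet> (M *v y)" for y
    by (simp add: q Jm_perp)
  have qpos: "x \<bullet> (S *v x) = 0 \<Longrightarrow> Jm *v x = 0" for x
    using pos[OF Jm_range, of x] q[of x] by fastforce
  show psdS: "psd S"
    unfolding psd_def
  proof (intro conjI sym allI)
    fix x :: "real^'n"
    show "0 \<le> x \<bullet> (S *v x)"
      using pos[OF Jm_range, of x] q[of x] by (cases "Jm *v x = 0") auto
  qed
  define H where "H = {y::real^'n. 1 \<bullet> y = 0}"
  have rangeH: "range (\<lambda>x. S *v x) \<subseteq> H"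
    unfolding H_def using sym_inner[OF sym, of 1] S1 by auto
  have inj: "inj_on (\<lambda>x. S *v x) (span H)"
  proof -
    have spanH: "span H = H" unfolding H_def by (rule span_eq_iff[THEN iffD2], rule subspace_hyperplane)
    show ?thesis unfolding spanH
    proof (rule inj_onI)
      fix x y assume xy: "x \<in> H" "y \<in> H" "S *v x = S *v y"
      then have "S *v (x - y) = 0" by (simp add: matrix_vector_mult_diff_distrib)
      then have "Jm *v (x - y) = 0" using qpos by simp
      moreover have "1 \<bullet> (x - y) = 0" using xy by (simp add: H_def inner_diff_right)
      ultimately show "x = y" using Jm_perp by fastforce
    qed
  qed
  have "dim ((\<lambda>x. S *v x) ` H) = dim H"
    by (rule dim_image_eq[OF matrix_vector_mul_linear inj])
  moreover have "dim ((\<lambda>x. S *v x) ` H) \<le> dim (range (\<lambda>x. S *v x))"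
    by (rule dim_subset) auto
  moreover have "dim (range (\<lambda>x. S *v x)) \<le> dim H"
    by (rule dim_subset[OF rangeH])
  ultimately show "rank S = CARD('n) - 1"
    using dim_H[where 'n='n] unfolding H_def[symmetric] by (simp add: rank_dim_range)
qed

lemma trace_quad: "trace (S::real^'n::finite^'n) = (\<Sum>k\<in>UNIV. axis k 1 \<bullet> (S *v axis k 1))"
  by (simp add: trace_def quad_axis)



lemma strict_pos:
  fixes mu :: "real^'n::finite" and Sg :: "real^'n^'n"
  assumes norm: "probit_normalized mu Sg" and n2: "CARD('n) \<ge> 2"
    and y: "1 \<bullet> y = 0" "y \<noteq> 0"
  shows "0 < y \<bullet> (Sg *v y)"
proof (rule ccontr)
  assume neg: "\<not> 0 < y \<bullet> (Sg *v y)"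
  have psdS: "psd Sg" and S1: "Sg *v 1 = 0" and rk: "rank Sg = CARD('n) - 1"
    using norm by (auto simp: probit_normalized_def)
  have sym: "transpose Sg = Sg" using psdS by (simp add: psd_def)
  have "y \<bullet> (Sg *v y) = 0" using neg psdS unfolding psd_def by (metis order.not_eq_order_implies_strict)
  then have Sy: "Sg *v y = 0" by (rule psd_zero[OF psdS])
  define B where "B = span {1::real^'n, y}"
  have "(1::real^'n) \<noteq> 0" by (simp add: vec_eq_iff)
  have one_ne_y: "(1::real^'n) \<noteq> y"
  proof
    assume "1 = y"
    then have "(1::real^'n) \<bullet> 1 = 0" using y by simp
    then show False using \<open>(1::real^'n) \<noteq> 0\<close> by simp
  qed
  have ind: "independent {1::real^'n, y}"
    by (rule pairwise_orthogonal_independent)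
      (use y \<open>(1::real^'n) \<noteq> 0\<close> in \<open>auto simp: pairwise_def orthogonal_def inner_commute\<close>)
  have dimB: "dim B = 2"
    unfolding B_def using dim_eq_card_independent[OF ind] one_ne_y by simp
  have orth: "\<forall>b\<in>B. orthogonal b (Sg *v z)" for z
  proof
    fix b assume "b \<in> B"
    have "orthogonal (Sg *v z) b"
    proof (rule orthogonal_to_span[OF \<open>b \<in> B\<close>[unfolded B_def]])
      fix w assume "w \<in> {1, y}"
      then show "orthogonal (Sg *v z) w"
        using sym_inner[OF sym, of 1 z] sym_inner[OF sym, of y z] S1 Sy
        by (auto simp: orthogonal_def inner_commute)
    qed
    then show "orthogonal b (Sg *v z)" by (simp add: orthogonal_commute)
  qed
  have rng: "range (\<lambda>x. Sg *v x) \<subseteq> {v \<in> UNIV. \<forall>x\<in>B. orthogonal x v}"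
    using orth by auto
  have "dim {v \<in> UNIV. \<forall>x\<in>B. orthogonal x v} + dim B = dim (UNIV :: (real^'n) set)"
    by (rule dim_subspace_orthogonal_to_vectors) (auto simp: B_def)
  then have "dim {v \<in> UNIV. \<forall>x\<in>B. orthogonal x v} = CARD('n) - 2"
    using dimB by simp
  moreover have "rank Sg \<le> dim {v \<in> UNIV. \<forall>x\<in>B. orthogonal x v}"
    unfolding rank_dim_range by (rule dim_subset[OF rng])
  ultimately show False using rk n2 by simp
qed

lemma uniform_pos:
  fixes mu :: "real^'n::finite" and Sg :: "real^'n^'n"
  assumes norm: "probit_normalized mu Sg" and n2: "CARD('n) \<ge> 2"
  shows "\<exists>lam>0. \<forall>y. 1 \<bullet> y = 0 \<longrightarrow> lam * (y \<bullet> y) \<le> y \<bullet> (Sg *v y)"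
proof -
  define T where "T = sphere (0::real^'n) 1 \<inter> {y. 1 \<bullet> y = 0}"
  have cT: "compact T" unfolding T_def
    by (intro compact_Int_closed compact_sphere closed_hyperplane)
  obtain a b :: 'n where ab: "a \<noteq> b"
  proof -
    have "\<not> (\<forall>a b::'n. a = b)"
    proof
      assume "\<forall>a b::'n. a = b"
      then have "card (UNIV::'n set) \<le> 1" by (simp add: card_le_Suc0_iff_eq)
      then show False using n2 by simp
    qed
    then show ?thesis using that by blast
  qed
  define v where "v = axis a 1 - axis b (1::real)"
  have v0: "v \<noteq> 0" using ab by (simp add: v_def vec_eq_iff axis_def) (metis)
  have v1: "1 \<bullet> v = 0" by (simp add: v_def inner_diff_right inner_axis)
  have neT: "T \<noteq> {}"
  proof -
    have "v /\<^sub>R norm v \<in> T" using v0 v1 by (simp add: T_def inner_scaleR_right)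
    then show ?thesis by blast
  qed
  have cont: "continuous_on T (\<lambda>y. y \<bullet> (Sg *v y))"
    by (intro continuous_intros linear_continuous_on linear_conv_bounded_linear[THEN iffD1] matrix_vector_mul_linear)
  obtain y0 where y0: "y0 \<in> T" "\<forall>y\<in>T. y0 \<bullet> (Sg *v y0) \<le> y \<bullet> (Sg *v y)"
    using continuous_attains_inf[OF cT neT cont] by blast
  define lam where "lam = y0 \<bullet> (Sg *v y0)"
  have "lam > 0" unfolding lam_def
    by (rule strict_pos[OF norm n2]) (use y0 in \<open>auto simp: T_def\<close>)
  moreover have "lam * (y \<bullet> y) \<le> y \<bullet> (Sg *v y)" if "1 \<bullet> y = 0" for y
  proof (cases "y = 0")
    case True then show ?thesis by simp
  next
    case False
    define u where "u = y /\<^sub>R norm y"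
    have "u \<in> T" using False that by (simp add: T_def u_def inner_scaleR_right)
    then have "lam \<le> u \<bullet> (Sg *v u)" using y0 by (simp add: lam_def)
    also have "u \<bullet> (Sg *v u) = (y \<bullet> (Sg *v y)) / (norm y)\<^sup>2"
      by (simp add: u_def matrix_vector_mult_scaleR power2_eq_square divide_inverse)
    finally have "lam * (norm y)\<^sup>2 \<le> y \<bullet> (Sg *v y)"
      using False by (simp add: pos_le_divide_eq)
    then show ?thesis by (simp add: power2_norm_eq_inner)
  qed
  ultimately show ?thesis by blast
qed



lemma std_prob: "prob_space std_normal_measure"
  unfolding std_normal_measure_def by (rule prob_space_normal_density) simp

lemma sets_std[measurable_cong, simp]: "sets std_normal_measure = sets borel"
  unfolding std_normal_measure_def by simp

lemma space_std[simp]: "space std_normal_measure = UNIV"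
  unfolding std_normal_measure_def by simp

lemma gv_prob: "prob_space (std_gauss_vec :: ('n::finite \<Rightarrow> real) measure)"
  unfolding std_gauss_vec_def by (rule prob_space_PiM) (simp add: std_prob)

lemma space_gv[simp]: "space (std_gauss_vec :: ('n::finite \<Rightarrow> real) measure) = UNIV"
  unfolding std_gauss_vec_def by (simp add: space_PiM)

lemma comp_meas[measurable]: "(\<lambda>z. z k) \<in> borel_measurable (std_gauss_vec :: ('n::finite \<Rightarrow> real) measure)"
proof -
  have "(\<lambda>z. z k) \<in> measurable (std_gauss_vec :: ('n::finite \<Rightarrow> real) measure) std_normal_measure"
    unfolding std_gauss_vec_def by (rule measurable_component_singleton) simp
  moreover have "measurable (std_gauss_vec :: ('n::finite \<Rightarrow> real) measure) std_normal_measure = measurable (std_gauss_vec :: ('n::finite \<Rightarrow> real) measure) borel"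
    by (rule measurable_cong_sets) simp_all
  ultimately show ?thesis by simp
qed

lemma comp_distr_eq: "distr (std_gauss_vec :: ('n::finite \<Rightarrow> real) measure) borel (\<lambda>z. z k) = std_normal_measure"
proof -
  have "distr (std_gauss_vec :: ('n::finite \<Rightarrow> real) measure) borel (\<lambda>z. z k)
      = distr (std_gauss_vec :: ('n::finite \<Rightarrow> real) measure) std_normal_measure (\<lambda>z. z k)"
    by (rule distr_cong) auto
  also have "\<dots> = std_normal_measure"
    unfolding std_gauss_vec_def by (rule distr_PiM_component) (auto simp: std_prob)
  finally show ?thesis .
qed

lemma comp_distributed: "distributed (std_gauss_vec :: ('n::finite \<Rightarrow> real) measure) lborel (\<lambda>z. z k) std_normal_density"
  unfolding distributed_def
proof (intro conjI)
  show "(\<lambda>z. z k) \<in> measurable std_gauss_vec lborel" by simp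
  show "(\<lambda>x. ennreal (std_normal_density x)) \<in> borel_measurable lborel" by simp
  have "distr (std_gauss_vec :: ('n::finite \<Rightarrow> real) measure) lborel (\<lambda>z. z k)
      = distr (std_gauss_vec :: ('n::finite \<Rightarrow> real) measure) borel (\<lambda>z. z k)"
    by (rule distr_cong) auto
  then show "distr (std_gauss_vec :: ('n::finite \<Rightarrow> real) measure) lborel (\<lambda>z. z k) = density lborel (\<lambda>x. ennreal (std_normal_density x))"
    using comp_distr_eq unfolding std_normal_measure_def by simp
qed

lemma gv_indep: "prob_space.indep_vars (std_gauss_vec :: ('n::finite \<Rightarrow> real) measure) (\<lambda>_. borel) (\<lambda>k z. z k) UNIV"
proof -
  interpret prob_space "std_gauss_vec :: ('n::finite \<Rightarrow> real) measure" by (rule gv_prob)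
  have L: "distr (std_gauss_vec :: ('n::finite \<Rightarrow> real) measure) (Pi\<^sub>M UNIV (\<lambda>i. borel)) (\<lambda>x. \<lambda>i\<in>UNIV. x i) = std_gauss_vec"
  proof -
    have "distr (std_gauss_vec :: ('n::finite \<Rightarrow> real) measure) (Pi\<^sub>M UNIV (\<lambda>i. borel)) (\<lambda>x. \<lambda>i\<in>UNIV. x i)
       = distr (std_gauss_vec :: ('n::finite \<Rightarrow> real) measure) (Pi\<^sub>M UNIV (\<lambda>i. borel)) (\<lambda>x. x)"
      by (rule distr_cong) auto
    also have "\<dots> = std_gauss_vec"
      unfolding std_gauss_vec_def by (rule distr_id2, rule sets_PiM_cong) auto
    finally show ?thesis .
  qed
  have R: "(Pi\<^sub>M UNIV (\<lambda>i. distr (std_gauss_vec :: ('n::finite \<Rightarrow> real) measure) borel (\<lambda>z. z i))) = std_gauss_vec"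
    apply (simp only: comp_distr_eq) by (simp add: std_gauss_vec_def)
  have rv: "\<And>i. random_variable borel (\<lambda>z::'n\<Rightarrow>real. z i)" by (rule comp_meas)
  show ?thesis
    using indep_vars_iff_distr_eq_PiM[where I=UNIV and M'="\<lambda>_. borel" and X="\<lambda>k z. z k", OF UNIV_not_empty rv] L R by simp
qed

lemma sum_normal:
  fixes w :: "'n::finite \<Rightarrow> real"
  assumes "\<exists>k. w k \<noteq> 0"
  shows "distributed (std_gauss_vec :: ('n \<Rightarrow> real) measure) lborel (\<lambda>z. \<Sum>k\<in>UNIV. w k * z k)
           (normal_density 0 (sqrt (\<Sum>k\<in>UNIV. (w k)\<^sup>2)))"
proof -
  interpret prob_space "std_gauss_vec :: ('n::finite \<Rightarrow> real) measure" by (rule gv_prob)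
  define I where "I = {k. w k \<noteq> 0}"
  have I: "finite I" "I \<noteq> {}" using assms by (auto simp: I_def)
  have ind: "indep_vars (\<lambda>_. borel) (\<lambda>k z. w k * z k) I"
    by (rule indep_vars_compose2[where X="\<lambda>k z. z k", OF indep_vars_subset[OF gv_indep]]) (simp_all, measurable)
  have nd: "distributed std_gauss_vec lborel (\<lambda>z. w k * z k) (normal_density 0 \<bar>w k\<bar>)" if "k \<in> I" for k
  proof -
    have "w k \<noteq> 0" using that by (simp add: I_def)
    from normal_density_affine[OF comp_distributed[of k] _ this, of 0]
    show ?thesis by simp
  qed
  have "distributed std_gauss_vec lborel (\<lambda>z. \<Sum>k\<in>I. w k * z k) (normal_density (\<Sum>k\<in>I. 0) (sqrt (\<Sum>k\<in>I. \<bar>w k\<bar>\<^sup>2)))"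
  proof (rule sum_indep_normal[OF I ind])
    fix i assume "i \<in> I"
    then show "0 < \<bar>w i\<bar>" by (simp add: I_def)
    show "distributed std_gauss_vec lborel (\<lambda>z. w i * z i) (normal_density 0 \<bar>w i\<bar>)" by (rule nd) fact
  qed
  moreover have "(\<lambda>z. \<Sum>k\<in>I. w k * z k) = (\<lambda>z. \<Sum>k\<in>UNIV. w k * z k)"
    by (intro ext sum.mono_neutral_left) (auto simp: I_def)
  moreover have "(\<Sum>k\<in>I. \<bar>w k\<bar>\<^sup>2) = (\<Sum>k\<in>UNIV. (w k)\<^sup>2)"
    by (simp, intro sum.mono_neutral_left) (auto simp: I_def)
  ultimately show ?thesis by simp
qed



definition dd :: "real^'n::finite^'n \<Rightarrow> 'n \<Rightarrow> 'n \<Rightarrow> real" where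
  "dd S i j = S $ i $ i + S $ j $ j - 2 * S $ i $ j"

lemma mvn_map_meas:
  fixes mu :: "real^'n::finite" and A :: "real^'n^'n"
  shows "(\<lambda>z. mu + A *v (\<chi> i. z i)) \<in> borel_measurable (std_gauss_vec :: ('n \<Rightarrow> real) measure)"
proof (subst borel_measurable_euclidean_space, intro ballI)
  fix b :: "real^'n" assume "b \<in> Basis"
  then obtain i where b: "b = axis i 1" by (auto simp: Basis_vec_def)
  have eq: "(\<lambda>z. (mu + A *v (\<chi> i. z i)) \<bullet> b) = (\<lambda>z. mu $ i + (\<Sum>k\<in>UNIV. A $ i $ k * z k))"
    by (simp add: b inner_axis matrix_vector_mult_def)
  show "(\<lambda>z. (mu + A *v (\<chi> i. z i)) \<bullet> b) \<in> borel_measurable std_gauss_vec"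
    unfolding eq by measurable
qed

lemma set_le_borel: "{x::real^'n::finite. x $ j \<le> x $ i} \<in> sets borel"
  by (intro borel_closed closed_Collect_le continuous_on_component continuous_on_id)

lemma pair_prob_red:
  fixes mu :: "real^'n::finite" and S :: "real^'n^'n"
  defines "A \<equiv> (SOME A :: real^'n^'n. A ** transpose A = S)"
  shows "pair_prob mu S i j = measure (std_gauss_vec :: ('n \<Rightarrow> real) measure)
      {z. 0 \<le> (mu $ i - mu $ j) + (\<Sum>k\<in>UNIV. (A $ i $ k - A $ j $ k) * z k)}"
proof -
  have "pair_prob mu S i j = measure (std_gauss_vec :: ('n \<Rightarrow> real) measure)
      ((\<lambda>z. mu + A *v (\<chi> i. z i)) -` {x. x $ j \<le> x $ i} \<inter> space std_gauss_vec)"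
    unfolding pair_prob_def mvn_def A_def[symmetric]
    by (rule measure_distr[OF mvn_map_meas set_le_borel])
  also have "(\<lambda>z. mu + A *v (\<chi> i. z i)) -` {x. x $ j \<le> x $ i} \<inter> space std_gauss_vec =
      {z. 0 \<le> (mu $ i - mu $ j) + (\<Sum>k\<in>UNIV. (A $ i $ k - A $ j $ k) * z k)}"
    by (auto simp: matrix_vector_mult_def left_diff_distrib sum_subtractf)
  finally show ?thesis .
qed

lemma pair_prob_diag:
  fixes mu :: "real^'n::finite" and S :: "real^'n^'n"
  shows "pair_prob mu S i i = 1"
proof -
  interpret prob_space "std_gauss_vec :: ('n \<Rightarrow> real) measure" by (rule gv_prob)
  have "{z::'n \<Rightarrow> real. 0 \<le> (mu $ i - mu $ i) + (\<Sum>k\<in>UNIV. ((SOME A :: real^'n^'n. A ** transpose A = S) $ i $ k - (SOME A :: real^'n^'n. A ** transpose A = S) $ i $ k) * z k)} = space std_gauss_vec"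
    by simp
  then show ?thesis by (simp only: pair_prob_red prob_space)
qed

lemma prob_formula:
  fixes w :: "'n::finite \<Rightarrow> real"
  assumes "\<exists>k. w k \<noteq> 0"
  shows "measure (std_gauss_vec :: ('n \<Rightarrow> real) measure) {z. 0 \<le> b + (\<Sum>k\<in>UNIV. w k * z k)}
       = measure std_normal_measure {x. 0 \<le> b / sqrt (\<Sum>k\<in>UNIV. (w k)\<^sup>2) + x}"
proof -
  interpret prob_space "std_gauss_vec :: ('n::finite \<Rightarrow> real) measure" by (rule gv_prob)
  define s where "s = sqrt (\<Sum>k\<in>UNIV. (w k)\<^sup>2)"
  obtain k0 where k0: "w k0 \<noteq> 0" using assms by blast
  have "0 < (w k0)\<^sup>2" using k0 by simp
  also have "\<dots> \<le> (\<Sum>k\<in>UNIV. (w k)\<^sup>2)" by (rule member_le_sum) auto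
  finally have s: "s > 0" by (simp add: s_def)
  define Y where "Y = (\<lambda>z::'n \<Rightarrow> real. \<Sum>k\<in>UNIV. w k * z k)"
  have Yd: "distributed std_gauss_vec lborel Y (normal_density 0 s)"
    unfolding Y_def s_def by (rule sum_normal[OF assms])
  have "distributed std_gauss_vec lborel (\<lambda>z. 0 + (1/s) * Y z) (normal_density (0 + (1/s) * 0) (\<bar>1/s\<bar> * s))"
    by (rule normal_density_affine[OF Yd s]) (use s in simp)
  then have Zd: "distributed std_gauss_vec lborel (\<lambda>z. Y z / s) std_normal_density"
    using s by simp
  have Zm: "(\<lambda>z. Y z / s) \<in> measurable std_gauss_vec lborel"
    using Zd by (simp add: distributed_def)
  have "measure std_normal_measure {x. 0 \<le> b / s + x} = measure (distr std_gauss_vec lborel (\<lambda>z. Y z / s)) {x. 0 \<le> b / s + x}"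
    using Zd by (simp add: distributed_def std_normal_measure_def)
  also have "\<dots> = measure std_gauss_vec ((\<lambda>z. Y z / s) -` {x. 0 \<le> b / s + x} \<inter> space std_gauss_vec)"
    by (rule measure_distr[OF Zm]) simp
  also have "(\<lambda>z. Y z / s) -` {x. 0 \<le> b / s + x} \<inter> space std_gauss_vec = {z. 0 \<le> b + Y z}"
  proof -
    have "0 \<le> b / s + Y z / s \<longleftrightarrow> 0 \<le> b + Y z" for z
    proof -
      have "b / s + Y z / s = (b + Y z) / s" by (simp add: add_divide_distrib)
      then show ?thesis using s by (simp add: zero_le_divide_iff)
    qed
    then show ?thesis by auto
  qed
  finally show ?thesis by (simp add: Y_def s_def)
qed

lemma factor_sum:
  fixes A :: "real^'n::finite^'n"
  assumes "A ** transpose A = S"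
  shows "(\<Sum>k\<in>UNIV. (A $ i $ k - A $ j $ k)\<^sup>2) = dd S i j"
proof -
  have e: "S $ p $ q = (\<Sum>k\<in>UNIV. A $ p $ k * A $ q $ k)" for p q
    using assms[symmetric] by (simp add: matrix_matrix_mult_def transpose_def)
  show ?thesis
    by (simp add: dd_def e power2_eq_square algebra_simps sum.distrib sum_subtractf sum_distrib_left)
qed

lemma pair_prob_formula:
  fixes mu :: "real^'n::finite" and S :: "real^'n^'n"
  assumes "psd S" "dd S i j > 0"
  shows "pair_prob mu S i j = measure std_normal_measure {x. 0 \<le> (mu $ i - mu $ j) / sqrt (dd S i j) + x}"
proof -
  define A where "A = (SOME A :: real^'n^'n. A ** transpose A = S)"
  have A: "A ** transpose A = S" unfolding A_def using psd_factor[OF assms(1)] by (rule someI_ex)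
  have fs: "(\<Sum>k\<in>UNIV. (A $ i $ k - A $ j $ k)\<^sup>2) = dd S i j" by (rule factor_sum[OF A])
  have ex: "\<exists>k. A $ i $ k - A $ j $ k \<noteq> 0"
  proof (rule ccontr)
    assume "\<not> ?thesis"
    then have "(\<Sum>k\<in>UNIV. (A $ i $ k - A $ j $ k)\<^sup>2) = 0" by simp
    then show False using fs assms(2) by simp
  qed
  show ?thesis
    unfolding pair_prob_red A_def[symmetric]
    using prob_formula[OF ex, of "mu $ i - mu $ j"] fs by simp
qed



lemma scaleR_mv: "((k::real) *\<^sub>R (A::real^'n::finite^'m)) *v x = k *\<^sub>R (A *v x)"
  by (simp add: vec_eq_iff matrix_vector_mult_def sum_distrib_left mult.assoc)

lemma dd_sym: "transpose S = S \<Longrightarrow> dd S i j = dd S j i"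
  using sym_entry[of S i j] by (simp add: dd_def)

lemma dd_diag[simp]: "dd S i i = 0"
  by (simp add: dd_def)

lemma dd_quad:
  assumes "transpose S = S"
  shows "dd S i j = (axis i 1 - axis j 1) \<bullet> (S *v (axis i 1 - axis j 1))"
  using sym_entry[OF assms, of i j]
  by (simp add: dd_def matrix_vector_mult_diff_distrib inner_diff_left inner_diff_right inner_axis')

lemma perp_axis_diff: "(1::real^'n::finite) \<bullet> (axis i 1 - axis j 1) = 0"
  by (simp add: inner_diff_right inner_axis)

lemma axis_diff_ne: "i \<noteq> j \<Longrightarrow> axis i 1 - axis j (1::real) \<noteq> 0"
  by (metis axis_eq_axis eq_iff_diff_eq_0 zero_neq_one)

lemma quad_sum: "y \<bullet> ((S::real^'n::finite^'n) *v y) = (\<Sum>i\<in>UNIV. \<Sum>j\<in>UNIV. y $ i * y $ j * S $ i $ j)"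
  by (simp add: inner_vec_def matrix_vector_mult_def sum_distrib_left ac_simps)

lemma quad_dd:
  fixes S :: "real^'n::finite^'n"
  assumes "1 \<bullet> y = 0"
  shows "y \<bullet> (S *v y) = - (1/2) * (\<Sum>i\<in>UNIV. \<Sum>j\<in>UNIV. y $ i * y $ j * dd S i j)"
proof -
  have s0: "(\<Sum>j\<in>UNIV. y $ j) = 0" using assms by (simp add: one_inner)
  have "(\<Sum>i\<in>UNIV. \<Sum>j\<in>UNIV. y $ i * y $ j * dd S i j)
      = (\<Sum>i\<in>UNIV. \<Sum>j\<in>UNIV. (y $ i * S $ i $ i) * y $ j) + (\<Sum>i\<in>UNIV. \<Sum>j\<in>UNIV. y $ i * (y $ j * S $ j $ j))
        - 2 * (\<Sum>i\<in>UNIV. \<Sum>j\<in>UNIV. y $ i * y $ j * S $ i $ j)"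
    by (simp add: dd_def sum.distrib sum_subtractf sum_distrib_left algebra_simps)
  also have "(\<Sum>i\<in>UNIV. \<Sum>j\<in>UNIV. (y $ i * S $ i $ i) * y $ j) = 0"
    by (simp add: sum_distrib_left[symmetric] s0)
  also have "(\<Sum>i\<in>UNIV. \<Sum>j\<in>UNIV. y $ i * (y $ j * S $ j $ j)) = 0"
    by (simp add: sum_distrib_left[symmetric] sum_distrib_right[symmetric] s0)
  finally show ?thesis by (simp add: quad_sum)
qed

lemma double_sum_bound:
  fixes y :: "real^'n::finite" and f :: "'n \<Rightarrow> 'n \<Rightarrow> real"
  assumes "\<And>i j. \<bar>f i j\<bar> \<le> B"
  shows "\<bar>\<Sum>i\<in>UNIV. \<Sum>j\<in>UNIV. y $ i * y $ j * f i j\<bar> \<le> real CARD('n) * real CARD('n) * B * (y \<bullet> y)"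
proof -
  have t: "\<bar>y $ i * y $ j * f i j\<bar> \<le> B * (y \<bullet> y)" for i j
  proof -
    have "\<bar>y $ i * y $ j * f i j\<bar> = \<bar>y $ i\<bar> * \<bar>y $ j\<bar> * \<bar>f i j\<bar>" by (simp add: abs_mult)
    also have "\<dots> \<le> norm y * norm y * B"
      by (intro mult_mono component_le_norm_cart assms) auto
    also have "norm y * norm y = y \<bullet> y" by (simp add: power2_norm_eq_inner[symmetric] power2_eq_square)
    finally show ?thesis by (simp add: mult.commute)
  qed
  have "\<bar>\<Sum>i\<in>UNIV. \<Sum>j\<in>UNIV. y $ i * y $ j * f i j\<bar> \<le> (\<Sum>i\<in>UNIV. \<bar>\<Sum>j\<in>UNIV. y $ i * y $ j * f i j\<bar>)"
    by (rule sum_abs)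
  also have "\<dots> \<le> (\<Sum>i\<in>UNIV. \<Sum>j\<in>UNIV. \<bar>y $ i * y $ j * f i j\<bar>)"
    by (intro sum_mono sum_abs)
  also have "\<dots> \<le> (\<Sum>i\<in>(UNIV::'n set). \<Sum>j\<in>(UNIV::'n set). B * (y \<bullet> y))"
    by (intro sum_mono t)
  also have "\<dots> = real CARD('n) * real CARD('n) * B * (y \<bullet> y)" by simp
  finally show ?thesis .
qed

definition Mpert :: "real^'n::finite^'n \<Rightarrow> ('n \<Rightarrow> 'n \<Rightarrow> real) \<Rightarrow> real \<Rightarrow> real^'n^'n" where
  "Mpert S h e = (\<chi> i j. - ((1 + e * h i j)\<^sup>2 * dd S i j) / 2)"

lemma Mpert_sym:
  assumes "transpose S = S" "\<And>i j. h i j = h j i"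
  shows "transpose (Mpert S h e) = Mpert S h e"
  using assms dd_sym[OF assms(1)] by (simp add: vec_eq_iff transpose_def Mpert_def)

lemma Mpert_quad:
  "y \<bullet> (Mpert S h e *v y) = - (1/2) * (\<Sum>i\<in>UNIV. \<Sum>j\<in>UNIV. y $ i * y $ j * ((1 + e * h i j)\<^sup>2 * dd S i j))"
  by (simp add: quad_sum Mpert_def sum_distrib_left algebra_simps sum_divide_distrib)

lemma Mpert_dd:
  assumes "transpose S = S" "\<And>i j. h i j = h j i"
  shows "dd (Mpert S h e) i j = (1 + e * h i j)\<^sup>2 * dd S i j"
  using assms dd_sym[OF assms(1), of i j] by (simp add: dd_def Mpert_def)

lemma Mpert_pos:
  fixes S :: "real^'n::finite^'n" and h :: "'n \<Rightarrow> 'n \<Rightarrow> real"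
  assumes lam: "lam > 0" "\<And>y. 1 \<bullet> y = 0 \<Longrightarrow> lam * (y \<bullet> y) \<le> y \<bullet> (S *v y)"
    and Hs: "\<And>i j. \<bar>h i j\<bar> \<le> Hs" and Ds: "\<And>i j. \<bar>dd S i j\<bar> \<le> Ds"
    and e: "0 < e" "e \<le> 1" "e * (real CARD('n) * real CARD('n) * (Hs * (2 + Hs) * Ds)) < lam"
    and y: "1 \<bullet> y = 0" "y \<noteq> 0"
  shows "0 < y \<bullet> (Mpert S h e *v y)"
proof -
  define f where "f i j = ((1 + e * h i j)\<^sup>2 - 1) * dd S i j" for i j
  have Hs0: "0 \<le> Hs" using Hs[of undefined undefined] by linarith
  have Ds0: "0 \<le> Ds" using Ds[of undefined undefined] by linarith
  have fb: "\<bar>f i j\<bar> \<le> e * (Hs * (2 + Hs) * Ds)" for i j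
  proof -
    have "(1 + e * h i j)\<^sup>2 - 1 = e * h i j * (2 + e * h i j)" by (simp add: power2_eq_square algebra_simps)
    then have "\<bar>f i j\<bar> = e * \<bar>h i j\<bar> * \<bar>2 + e * h i j\<bar> * \<bar>dd S i j\<bar>"
      using e by (simp add: f_def abs_mult)
    also have "\<dots> \<le> e * Hs * (2 + Hs) * Ds"
    proof -
      have "\<bar>e * h i j\<bar> = e * \<bar>h i j\<bar>" using e by (simp add: abs_mult)
      also have "\<dots> \<le> \<bar>h i j\<bar>" using e by (intro mult_left_le_one_le) auto
      finally have "\<bar>e * h i j\<bar> \<le> \<bar>h i j\<bar>" .
      then have "\<bar>2 + e * h i j\<bar> \<le> 2 + Hs" using Hs[of i j] by linarith
      then show ?thesis
        using e Hs[of i j] Ds[of i j] Hs0 Ds0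
        by (intro mult_mono) auto
    qed
    finally show ?thesis by (simp add: ac_simps)
  qed
  have E: "y \<bullet> (Mpert S h e *v y) = y \<bullet> (S *v y) - (1/2) * (\<Sum>i\<in>UNIV. \<Sum>j\<in>UNIV. y $ i * y $ j * f i j)"
  proof -
    have "(\<Sum>i\<in>UNIV. \<Sum>j\<in>UNIV. y $ i * y $ j * ((1 + e * h i j)\<^sup>2 * dd S i j))
        = (\<Sum>i\<in>UNIV. \<Sum>j\<in>UNIV. y $ i * y $ j * dd S i j) + (\<Sum>i\<in>UNIV. \<Sum>j\<in>UNIV. y $ i * y $ j * f i j)"
      by (simp add: f_def sum.distrib[symmetric] algebra_simps)
    then show ?thesis using quad_dd[OF y(1), of S] by (simp add: Mpert_quad algebra_simps)
  qed
  have yy: "y \<bullet> y > 0" using y by simp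
  have "\<bar>\<Sum>i\<in>UNIV. \<Sum>j\<in>UNIV. y $ i * y $ j * f i j\<bar> \<le> real CARD('n) * real CARD('n) * (e * (Hs * (2 + Hs) * Ds)) * (y \<bullet> y)"
    by (rule double_sum_bound[OF fb])
  also have "\<dots> < lam * (y \<bullet> y)"
    using e(3) yy by (simp add: ac_simps)
  finally have "\<bar>\<Sum>i\<in>UNIV. \<Sum>j\<in>UNIV. y $ i * y $ j * f i j\<bar> < lam * (y \<bullet> y)" .
  moreover have "lam * (y \<bullet> y) \<le> y \<bullet> (S *v y)" by (rule lam(2)[OF y(1)])
  moreover have "lam * (y \<bullet> y) > 0" using lam yy by simp
  ultimately show ?thesis unfolding E by linarith
qed



lemma third:
  assumes "CARD('n::finite) \<ge> 3"
  shows "\<exists>k::'n. k \<noteq> p \<and> k \<noteq> q"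
proof (rule ccontr)
  assume "\<not> ?thesis"
  then have "(UNIV::'n set) \<subseteq> {p, q}" by auto
  then have "CARD('n) \<le> card {p, q}" by (intro card_mono) auto
  also have "\<dots> \<le> 2" by (simp add: card_insert_le_m1)
  finally show False using assms by simp
qed

lemma choose_hg:
  fixes mu :: "real^'n::finite"
  assumes n3: "CARD('n) \<ge> 3" and mu1: "mu \<bullet> 1 = 0"
  shows "\<exists>(h::'n \<Rightarrow> 'n \<Rightarrow> real) (g::real^'n) i0 j0 k0. (\<forall>i j. h i j = h j i) \<and>
     (\<forall>i j. g $ i - g $ j = h i j * (mu $ i - mu $ j)) \<and> i0 \<noteq> k0 \<and> j0 \<noteq> k0 \<and> h i0 k0 \<noteq> h j0 k0"
proof (cases "\<exists>p q. mu $ p \<noteq> mu $ q")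
  case True
  then obtain p q where pq: "mu $ p \<noteq> mu $ q" by blast
  obtain k where k: "k \<noteq> p" "k \<noteq> q" using third[OF n3] by blast
  define h where "h i j = mu $ i + mu $ j" for i j
  define g where "g = (\<chi> i. (mu $ i)\<^sup>2)"
  have "\<forall>i j. g $ i - g $ j = h i j * (mu $ i - mu $ j)"
    by (simp add: g_def h_def power2_eq_square algebra_simps)
  moreover have "h p k \<noteq> h q k" using pq by (simp add: h_def)
  ultimately show ?thesis using k by (intro exI[of _ h] exI[of _ g] exI[of _ p] exI[of _ q] exI[of _ k]) (auto simp: h_def)
next
  case False
  obtain a :: 'n where True by blast
  obtain j where j: "j \<noteq> a" using third[OF n3, of a a] by blast
  obtain k where k: "k \<noteq> a" "k \<noteq> j" using third[OF n3, of a j] by blast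
  define h where "h i j = (if i = a then 1 else 0) + (if j = a then 1 else (0::real))" for i j
  have "\<forall>i j. (0::real^'n) $ i - 0 $ j = h i j * (mu $ i - mu $ j)" using False by simp
  moreover have "h a k \<noteq> h j k" using j k by (simp add: h_def)
  ultimately show ?thesis using j k
    by (intro exI[of _ h] exI[of _ "0::real^'n"] exI[of _ a] exI[of _ j] exI[of _ k]) (auto simp: h_def)
qed

lemma le_double_sum: "\<bar>f i j\<bar> \<le> (\<Sum>i\<in>UNIV. \<Sum>j\<in>UNIV. \<bar>f i j\<bar>)" for f :: "'n::finite \<Rightarrow> 'n \<Rightarrow> real"
proof -
  have "\<bar>f i j\<bar> \<le> (\<Sum>j\<in>UNIV. \<bar>f i j\<bar>)" by (rule member_le_sum) auto
  also have "\<dots> \<le> (\<Sum>i\<in>UNIV. \<Sum>j\<in>UNIV. \<bar>f i j\<bar>)"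
    by (rule member_le_sum[where f="\<lambda>i. \<Sum>j\<in>UNIV. \<bar>f i j\<bar>"]) (auto intro: sum_nonneg)
  finally show ?thesis .
qed

lemma dd_scale: "dd (k *\<^sub>R A) i j = k * dd A i j"
  by (simp add: dd_def algebra_simps)

theorem theorem1:
  fixes mu :: "real^'n::finite" and Sg :: "real^'n^'n"
  assumes "CARD('n) \<ge> 3"
    and "probit_normalized mu Sg"
  shows "\<exists>S :: ((real^'n) \<times> (real^'n^'n)) set. infinite S \<and>
           (\<forall>(mu', Sg') \<in> S. probit_normalized mu' Sg' \<and>
              (\<forall>i j. pair_prob mu Sg i j = pair_prob mu' Sg' i j))"
proof -
  have n3: "CARD('n) \<ge> 3" by fact
  have n2: "CARD('n) \<ge> 2" using n3 by simp
  have norm: "probit_normalized mu Sg" by fact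
  have psdS: "psd Sg" and S1: "Sg *v 1 = 0" and mu1: "mu \<bullet> 1 = 0"
    using norm by (auto simp: probit_normalized_def)
  have sym: "transpose Sg = Sg" using psdS by (simp add: psd_def)
  obtain lam where lam: "lam > 0" "\<And>y. 1 \<bullet> y = 0 \<Longrightarrow> lam * (y \<bullet> y) \<le> y \<bullet> (Sg *v y)"
    using uniform_pos[OF norm n2] by blast
  obtain h :: "'n \<Rightarrow> 'n \<Rightarrow> real" and g :: "real^'n" and i0 j0 k0 where
    hsym: "\<And>i j. h i j = h j i" and hg: "\<And>i j. g $ i - g $ j = h i j * (mu $ i - mu $ j)"
    and idx: "i0 \<noteq> k0" "j0 \<noteq> k0" "h i0 k0 \<noteq> h j0 k0"
    using choose_hg[OF n3 mu1] by blast
  have ddpos: "dd Sg i j > 0" if "i \<noteq> j" for i j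
    using strict_pos[OF norm n2 perp_axis_diff axis_diff_ne[OF that]] dd_quad[OF sym, of i j] by simp
  define Hs where "Hs = (\<Sum>i\<in>UNIV. \<Sum>j\<in>UNIV. \<bar>h i j\<bar>)"
  define Ds where "Ds = (\<Sum>i\<in>UNIV. \<Sum>j\<in>UNIV. \<bar>dd Sg i j\<bar>)"
  have Hs: "\<bar>h i j\<bar> \<le> Hs" for i j unfolding Hs_def by (rule le_double_sum)
  have Ds: "\<bar>dd Sg i j\<bar> \<le> Ds" for i j unfolding Ds_def by (rule le_double_sum)
  have Hs0: "0 \<le> Hs" using Hs[of i0 i0] by linarith
  have Ds0: "0 \<le> Ds" using Ds[of i0 i0] by linarith
  define K where "K = real CARD('n) * real CARD('n) * (Hs * (2 + Hs) * Ds)"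
  have K0: "0 \<le> K" unfolding K_def using Hs0 Ds0 by simp
  define e0 where "e0 = min 1 (min (1 / (2 * (Hs + 1))) (lam / (K + 1)))"
  have e0: "0 < e0" using Hs0 K0 lam by (simp add: e0_def)
  define M where "M e = Mpert Sg h e" for e
  define S0 where "S0 e = Jm ** M e ** Jm" for e
  define kap where "kap e = real CARD('n) / trace (S0 e)" for e
  define Sg' where "Sg' e = Jm ** (kap e *\<^sub>R M e) ** Jm" for e
  define mu' where "mu' e = sqrt (kap e) *\<^sub>R (Jm *v (mu + e *\<^sub>R g))" for e
  define c where "c e i j = 1 + e * h i j" for e i j
  have props: "probit_normalized (mu' e) (Sg' e) \<and> kap e > 0 \<and> (\<forall>i j. c e i j > 0) \<and>
      (\<forall>i j. dd (Sg' e) i j = kap e * (c e i j)\<^sup>2 * dd Sg i j) \<and>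
      (\<forall>i j. mu' e $ i - mu' e $ j = sqrt (kap e) * c e i j * (mu $ i - mu $ j))"
    if e: "e \<in> {0<..<e0}" for e
  proof -
    have e1: "0 < e" "e \<le> 1" using e by (auto simp: e0_def)
    have eK: "e * K < lam"
    proof -
      have "e * K \<le> e * (K + 1)" using e1 by simp
      also have "\<dots> < e0 * (K + 1)" using e K0 by (intro mult_strict_right_mono) auto
      also have "\<dots> \<le> lam / (K + 1) * (K + 1)" using K0 by (intro mult_right_mono) (auto simp: e0_def)
      also have "\<dots> = lam" using K0 by simp
      finally show ?thesis .
    qed
    have eK': "e * (real CARD('n) * real CARD('n) * (Hs * (2 + Hs) * Ds)) < lam"
      using eK by (simp only: K_def)
    have cpos: "c e i j > 0" for i j
    proof -
      have "\<bar>e * h i j\<bar> \<le> e * Hs" using e1 Hs[of i j] by (simp add: abs_mult mult_left_mono)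
      also have "\<dots> \<le> 1 / (2 * (Hs + 1)) * Hs" using e Hs0 by (intro mult_right_mono) (auto simp: e0_def)
      also have "\<dots> < 1" using Hs0 by (simp add: field_simps)
      finally show ?thesis unfolding c_def by linarith
    qed
    have Msym: "transpose (M e) = M e" unfolding M_def by (rule Mpert_sym[OF sym hsym])
    have Mpos: "0 < y \<bullet> (M e *v y)" if "1 \<bullet> y = 0" "y \<noteq> 0" for y
      unfolding M_def by (rule Mpert_pos[OF lam Hs Ds e1 eK' that])
    have Mpos_all: "\<forall>y. 1 \<bullet> y = 0 \<longrightarrow> y \<noteq> 0 \<longrightarrow> 0 < y \<bullet> (M e *v y)" using Mpos by blast
    note C0 = construct[OF Msym Mpos_all, folded S0_def]
    have Jax: "Jm *v axis i0 1 \<noteq> (0::real^'n)"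
    proof
      assume "Jm *v axis i0 1 = (0::real^'n)"
      then have "(Jm *v axis i0 1) $ k0 = (0::real)" by simp
      then show False using idx(1) by (simp add: Jm_mv axis_def)
    qed
    have tr0: "trace (S0 e) = (\<Sum>k\<in>UNIV. (Jm *v axis k 1) \<bullet> (M e *v (Jm *v axis k 1)))"
      by (simp add: trace_quad C0(5))
    have trpos: "trace (S0 e) > 0"
      unfolding tr0
    proof (rule sum_pos2[of UNIV i0])
      show "0 < (Jm *v axis i0 1) \<bullet> (M e *v (Jm *v axis i0 1))" by (rule Mpos[OF Jm_range Jax])
      fix k show "0 \<le> (Jm *v axis k 1) \<bullet> (M e *v (Jm *v axis k (1::real)))"
        using C0(3) C0(5)[of "axis k 1"] unfolding psd_def by metis
    qed auto
    have kpos: "kap e > 0" using trpos n2 by (simp add: kap_def)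
    have kMsym: "transpose (kap e *\<^sub>R M e) = kap e *\<^sub>R M e" by (simp add: transpose_scalar Msym)
    have kMpos: "0 < y \<bullet> ((kap e *\<^sub>R M e) *v y)" if "1 \<bullet> y = 0" "y \<noteq> 0" for y
      using Mpos[OF that] kpos by (simp add: scaleR_mv)
    have kMpos_all: "\<forall>y. 1 \<bullet> y = 0 \<longrightarrow> y \<noteq> 0 \<longrightarrow> 0 < y \<bullet> ((kap e *\<^sub>R M e) *v y)" using kMpos by blast
    note C1 = construct[OF kMsym kMpos_all, folded Sg'_def]
    have tr1: "trace (Sg' e) = real CARD('n)"
    proof -
      have "trace (Sg' e) = (\<Sum>k\<in>UNIV. (Jm *v axis k 1) \<bullet> ((kap e *\<^sub>R M e) *v (Jm *v axis k 1)))"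
        by (simp add: trace_quad C1(5))
      also have "\<dots> = kap e * trace (S0 e)"
        by (simp add: tr0 scaleR_mv sum_distrib_left)
      also have "\<dots> = real CARD('n)" using trpos by (simp add: kap_def)
      finally show ?thesis .
    qed
    have mu'1: "mu' e \<bullet> 1 = 0"
      by (simp add: mu'_def inner_commute[of _ 1] Jm_range)
    have "probit_normalized (mu' e) (Sg' e)"
      unfolding probit_normalized_def using C1(2,3,4) tr1 mu'1 by simp
    moreover have "dd (Sg' e) i j = kap e * (c e i j)\<^sup>2 * dd Sg i j" for i j
    proof -
      have "dd (Sg' e) i j = (axis i 1 - axis j 1) \<bullet> (Sg' e *v (axis i 1 - axis j 1))"
        by (rule dd_quad[OF C1(1)])
      also have "\<dots> = (axis i 1 - axis j 1) \<bullet> ((kap e *\<^sub>R M e) *v (axis i 1 - axis j 1))"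
        by (rule C1(6)[OF perp_axis_diff])
      also have "\<dots> = dd (kap e *\<^sub>R M e) i j" by (rule dd_quad[OF kMsym, symmetric])
      also have "\<dots> = kap e * (c e i j)\<^sup>2 * dd Sg i j"
        by (simp add: dd_scale M_def Mpert_dd[OF sym hsym] c_def)
      finally show ?thesis .
    qed
    moreover have "mu' e $ i - mu' e $ j = sqrt (kap e) * c e i j * (mu $ i - mu $ j)" for i j
    proof -
      have "mu' e $ i - mu' e $ j = sqrt (kap e) * ((Jm *v (mu + e *\<^sub>R g)) $ i - (Jm *v (mu + e *\<^sub>R g)) $ j)"
        by (simp add: mu'_def right_diff_distrib)
      also have "\<dots> = sqrt (kap e) * ((mu $ i - mu $ j) + e * (g $ i - g $ j))"
        by (simp only: Jm_diff) (simp add: algebra_simps)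
      also have "\<dots> = sqrt (kap e) * c e i j * (mu $ i - mu $ j)"
        by (simp add: hg c_def algebra_simps)
      finally show ?thesis .
    qed
    ultimately show ?thesis using kpos cpos by blast
  qed
  define S where "S = (\<lambda>e. (mu' e, Sg' e)) ` {0<..<e0}"
  have inj: "inj_on (\<lambda>e. (mu' e, Sg' e)) {0<..<e0}"
  proof (rule inj_onI)
    fix e1 e2 assume e1: "e1 \<in> {0<..<e0}" and e2: "e2 \<in> {0<..<e0}" and eq: "(mu' e1, Sg' e1) = (mu' e2, Sg' e2)"
    note P1 = props[OF e1] and P2 = props[OF e2]
    have Da: "dd Sg i0 k0 > 0" "dd Sg j0 k0 > 0" using ddpos idx by auto
    have a: "kap e1 * (c e1 i0 k0)\<^sup>2 = kap e2 * (c e2 i0 k0)\<^sup>2"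
      using eq P1 P2 Da(1) by (metis mult_right_cancel order_less_irrefl prod.inject)
    have b: "kap e1 * (c e1 j0 k0)\<^sup>2 = kap e2 * (c e2 j0 k0)\<^sup>2"
      using eq P1 P2 Da(2) by (metis mult_right_cancel order_less_irrefl prod.inject)
    have "kap e1 * kap e2 * ((c e1 i0 k0 * c e2 j0 k0)\<^sup>2) = kap e1 * kap e2 * ((c e2 i0 k0 * c e1 j0 k0)\<^sup>2)"
    proof -
      have "kap e1 * kap e2 * ((c e1 i0 k0 * c e2 j0 k0)\<^sup>2) = (kap e1 * (c e1 i0 k0)\<^sup>2) * (kap e2 * (c e2 j0 k0)\<^sup>2)"
        by (simp add: power_mult_distrib ac_simps)
      also have "\<dots> = (kap e2 * (c e2 i0 k0)\<^sup>2) * (kap e1 * (c e1 j0 k0)\<^sup>2)" using a b by simp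
      also have "\<dots> = kap e1 * kap e2 * ((c e2 i0 k0 * c e1 j0 k0)\<^sup>2)"
        by (simp add: power_mult_distrib ac_simps)
      finally show ?thesis .
    qed
    then have "(c e1 i0 k0 * c e2 j0 k0)\<^sup>2 = (c e2 i0 k0 * c e1 j0 k0)\<^sup>2" using P1 P2 by simp
    then have "c e1 i0 k0 * c e2 j0 k0 = c e2 i0 k0 * c e1 j0 k0"
      using P1 P2 by (simp add: power2_eq_iff_nonneg less_imp_le)
    then have "(e1 - e2) * (h i0 k0 - h j0 k0) = 0" by (simp add: c_def algebra_simps)
    then show "e1 = e2" using idx(3) by simp
  qed
  have "infinite S" unfolding S_def
    using infinite_Ioo[OF e0] finite_imageD[OF _ inj] by blast
  moreover have "\<forall>(m', G') \<in> S. probit_normalized m' G' \<and> (\<forall>i j. pair_prob mu Sg i j = pair_prob m' G' i j)"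
  proof (clarsimp simp: S_def)
    fix e assume e: "0 < e" "e < e0"
    then have P: "probit_normalized (mu' e) (Sg' e) \<and> kap e > 0 \<and> (\<forall>i j. c e i j > 0) \<and>
      (\<forall>i j. dd (Sg' e) i j = kap e * (c e i j)\<^sup>2 * dd Sg i j) \<and>
      (\<forall>i j. mu' e $ i - mu' e $ j = sqrt (kap e) * c e i j * (mu $ i - mu $ j))"
      using props by auto
    have "pair_prob mu Sg i j = pair_prob (mu' e) (Sg' e) i j" for i j
    proof (cases "i = j")
      case True then show ?thesis by (simp add: pair_prob_diag)
    next
      case False
      have D: "dd Sg i j > 0" using ddpos[OF False] .
      have k: "kap e > 0" and ci: "c e i j > 0" using P by auto
      have ddeq: "dd (Sg' e) i j = kap e * (c e i j)\<^sup>2 * dd Sg i j" using P by blast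
      have mueq: "mu' e $ i - mu' e $ j = sqrt (kap e) * c e i j * (mu $ i - mu $ j)" using P by blast
      have D': "dd (Sg' e) i j > 0" unfolding ddeq using k ci D by (intro mult_pos_pos) auto
      have psd': "psd (Sg' e)" using P by (simp add: probit_normalized_def)
      have ratio: "(mu' e $ i - mu' e $ j) / sqrt (dd (Sg' e) i j) = (mu $ i - mu $ j) / sqrt (dd Sg i j)"
      proof -
        have "sqrt (dd (Sg' e) i j) = sqrt (kap e) * c e i j * sqrt (dd Sg i j)"
          unfolding ddeq using ci by (simp add: real_sqrt_mult)
        then show ?thesis unfolding mueq using k ci D by simp
      qed
      show ?thesis
        using pair_prob_formula[OF psdS D, of mu] pair_prob_formula[OF psd' D', of "mu' e"] ratio by simp
    qed
    then show "probit_normalized (mu' e) (Sg' e) \<and> (\<forall>i j. pair_prob mu Sg i j = pair_prob (mu' e) (Sg' e) i j)"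
      using P by blast
  qed
  ultimately show ?thesis by blast
qed


end
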